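(* For all $t>0$, writing $u(0+,t)=\lim_{x\searrow0}u(x,t)$: (1) if $F(0,t)<G(0,t)$, then $u(0+,t)<0$; (2) if $u(0+,t)<0$, then $F(0,t)\le G(0,t)$.
   Context: Standing assumptions: $u_0,u_b:[0,\infty)\to\mathbb{R}$ bounded measurable with $u_b>0$; $\rho_0,\rho_b:[0,\infty)\to(0,\infty)$ positive locally bounded measurable. For $x,t,y,\tau\ge0$: $F(y,x,t)=\int_0^y[tu_0(\eta)+\eta-x]\rho_0(\eta)\,d\eta$, $G(\tau,x,t)=\int_0^\tau[x-u_b(\eta)(t-\eta)]\rho_b(\eta)u_b(\eta)\,d\eta$, $F(x,t)=\min_{y\ge0}F(y,x,t)$, $G(x,t)=\min_{\tau\ge0}G(\tau,x,t)$ (minima attained); $y_*\le y^*$ smallest/largest minimizers of $F(\cdot,x,t)$, $\tau_*\le\tau^*$ those of $G(\cdot,x,t)$. Definition of $u$: for $x,t>0$: (a) if $F(x,t)<G(x,t)$, $y_*=y^*$: $u=\frac{x-y_*}{t}$; (b) if $F<G$, $y_*<y^*$: $u=\frac{\int_{y_*}^{y^*}\rho_0u_0}{\int_{y_*}^{y^*}\rho_0}$; (c) if $F>G$, $\tau_*=\tau^*$: $u=\frac{x}{t-\tau_*}$; (d) if $F>G$, $\tau_*<\tau^*$: $u=\frac{\int_{\tau_*}^{\tau^*}\rho_bu_b^2}{\int_{\tau_*}^{\tau^*}\rho_bu_b}$; (e) if $F=G$ and ($y^*\ne0$ or $\tau^*\ne0$): $u=\frac{\int_0^{\tau^*}\rho_bu_b^2+\int_0^{y^*}\rho_0u_0}{\int_0^{\tau^*}\rho_bu_b+\int_0^{y^*}\rho_0}$;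 (f) if $F=G$, $y^*=\tau^*=0$: $u=x/t$. For $x=0$: $u(0,t)=u_b(t)$ if $F(0,t)>G(0,t)$, $0$ if $F(0,t)<G(0,t)$, formula (e) with $x=0$ if $F(0,t)=G(0,t)$. *)

theory Defs
  imports "HOL-Analysis.Analysis"
begin

text \<open>Data: u0, ub, rho0, rhob :: real => real, only their values on [0,inf) matter.\<close>

definition Fy :: "(real \<Rightarrow> real) \<Rightarrow> (real \<Rightarrow> real) \<Rightarrow> real \<Rightarrow> real \<Rightarrow> real \<Rightarrow> real" where
  "Fy u0 \<rho>0 y x t = (LINT \<eta>:{0..y}|lborel. (t * u0 \<eta> + \<eta> - x) * \<rho>0 \<eta>)"

definition G\<tau> :: "(real \<Rightarrow> real) \<Rightarrow> (real \<Rightarrow> real) \<Rightarrow> real \<Rightarrow> real \<Rightarrow> real \<Rightarrow> real" where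
  "G\<tau> ub \<rho>b \<tau> x t = (LINT \<eta>:{0..\<tau>}|lborel. (x - ub \<eta> * (t - \<eta>)) * \<rho>b \<eta> * ub \<eta>)"

definition Fmin :: "(real \<Rightarrow> real) \<Rightarrow> (real \<Rightarrow> real) \<Rightarrow> real \<Rightarrow> real \<Rightarrow> real" where
  "Fmin u0 \<rho>0 x t = Inf ((\<lambda>y. Fy u0 \<rho>0 y x t) ` {0..})"

definition Gmin :: "(real \<Rightarrow> real) \<Rightarrow> (real \<Rightarrow> real) \<Rightarrow> real \<Rightarrow> real \<Rightarrow> real" where
  "Gmin ub \<rho>b x t = Inf ((\<lambda>\<tau>. G\<tau> ub \<rho>b \<tau> x t) ` {0..})"

definition Fargmin :: "(real \<Rightarrow> real) \<Rightarrow> (real \<Rightarrow> real) \<Rightarrow> real \<Rightarrow> real \<Rightarrow> real set" where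
  "Fargmin u0 \<rho>0 x t = {y. 0 \<le> y \<and> (\<forall>y'\<ge>0. Fy u0 \<rho>0 y x t \<le> Fy u0 \<rho>0 y' x t)}"

definition Gargmin :: "(real \<Rightarrow> real) \<Rightarrow> (real \<Rightarrow> real) \<Rightarrow> real \<Rightarrow> real \<Rightarrow> real set" where
  "Gargmin ub \<rho>b x t = {\<tau>. 0 \<le> \<tau> \<and> (\<forall>\<tau>'\<ge>0. G\<tau> ub \<rho>b \<tau> x t \<le> G\<tau> ub \<rho>b \<tau>' x t)}"

definition ylo where "ylo u0 \<rho>0 x t = Inf (Fargmin u0 \<rho>0 x t)"
definition yup where "yup u0 \<rho>0 x t = Sup (Fargmin u0 \<rho>0 x t)"
definition tlo where "tlo ub \<rho>b x t = Inf (Gargmin ub \<rho>b x t)"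
definition tup where "tup ub \<rho>b x t = Sup (Gargmin ub \<rho>b x t)"

definition u_e :: "(real \<Rightarrow> real) \<Rightarrow> (real \<Rightarrow> real) \<Rightarrow> (real \<Rightarrow> real) \<Rightarrow> (real \<Rightarrow> real) \<Rightarrow> real \<Rightarrow> real \<Rightarrow> real" where
  "u_e u0 \<rho>0 ub \<rho>b x t =
     ((LINT \<eta>:{0..tup ub \<rho>b x t}|lborel. \<rho>b \<eta> * (ub \<eta>)\<^sup>2) + (LINT \<eta>:{0..yup u0 \<rho>0 x t}|lborel. \<rho>0 \<eta> * u0 \<eta>))
     / ((LINT \<eta>:{0..tup ub \<rho>b x t}|lborel. \<rho>b \<eta> * ub \<eta>) + (LINT \<eta>:{0..yup u0 \<rho>0 x t}|lborel. \<rho>0 \<eta>))"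

definition usol :: "(real \<Rightarrow> real) \<Rightarrow> (real \<Rightarrow> real) \<Rightarrow> (real \<Rightarrow> real) \<Rightarrow> (real \<Rightarrow> real) \<Rightarrow> real \<Rightarrow> real \<Rightarrow> real" where
  "usol u0 \<rho>0 ub \<rho>b x t =
    (let F = Fmin u0 \<rho>0 x t; G = Gmin ub \<rho>b x t;
         y1 = ylo u0 \<rho>0 x t; y2 = yup u0 \<rho>0 x t;
         t1 = tlo ub \<rho>b x t; t2 = tup ub \<rho>b x t in
     if x = 0 then
       (if F > G then ub t else if F < G then 0 else u_e u0 \<rho>0 ub \<rho>b x t)
     else if F < G then
       (if y1 = y2 then (x - y1) / t
        else (LINT \<eta>:{y1..y2}|lborel. \<rho>0 \<eta> * u0 \<eta>) / (LINT \<eta>:{y1..y2}|lborel. \<rho>0 \<eta>))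
     else if F > G then
       (if t1 = t2 then x / (t - t1)
        else (LINT \<eta>:{t1..t2}|lborel. \<rho>b \<eta> * (ub \<eta>)\<^sup>2) / (LINT \<eta>:{t1..t2}|lborel. \<rho>b \<eta> * ub \<eta>))
     else
       (if y2 \<noteq> 0 \<or> t2 \<noteq> 0 then u_e u0 \<rho>0 ub \<rho>b x t else x / t))"

end

theory Submission
  imports Defs
begin

lemma si_gen:
  fixes h :: "real \<Rightarrow> real"
  assumes meas: "(\<lambda>x. indicator {0..} x * h x) \<in> borel_measurable borel"
    and a: "0 \<le> a" and bnd: "\<forall>x\<in>{a..b}. \<bar>h x\<bar> \<le> B"
  shows "set_integrable lborel {a..b} h"
proof -
  have eq: "(\<lambda>x. indicator {a..b} x *\<^sub>R h x) = (\<lambda>x. indicator {a..b} x *\<^sub>R (indicator {0..} x * h x))"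
    using a by (auto split: split_indicator)
  have fin: "emeasure lborel {a..b} < \<infinity>" by (cases "a \<le> b") auto
  have "integrable lborel (\<lambda>x. indicator {a..b} x *\<^sub>R (indicator {0..} x * h x))"
    using meas bnd a fin by (intro integrableI_bounded_set_indicator[where B=B]) (auto split: split_indicator)
  then show ?thesis unfolding set_integrable_def eq .
qed

lemma int_pos_L:
  fixes h :: "real \<Rightarrow> real"
  assumes si: "set_integrable lborel {a..b} h" and ab: "a < b" and pos: "\<forall>x\<in>{a..b}. h x > 0"
  shows "(LINT x:{a..b}|lborel. h x) > 0"
proof -
  have ge: "(LINT x:{a..b}|lborel. h x) \<ge> 0"
    unfolding set_lebesgue_integral_def
    by (rule Bochner_Integration.integral_nonneg) (use pos in \<open>auto split: split_indicator intro: less_imp_le\<close>)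
  have "(LINT x:{a..b}|lborel. h x) \<noteq> 0"
  proof
    assume "(LINT x:{a..b}|lborel. h x) = 0"
    then have "integral\<^sup>L lborel (\<lambda>x. indicator {a..b} x *\<^sub>R h x) = 0"
      unfolding set_lebesgue_integral_def .
    moreover have "AE x in lborel. 0 \<le> indicator {a..b} x *\<^sub>R h x"
      using pos by (auto split: split_indicator intro!: less_imp_le)
    ultimately have "AE x in lborel. indicator {a..b} x *\<^sub>R h x = 0"
      using integral_nonneg_eq_0_iff_AE si unfolding set_integrable_def by blast
    then have "AE x in lborel. x \<notin> {a..b}"
      by eventually_elim (use pos in \<open>fastforce split: split_indicator\<close>)
    moreover have s: "{x\<in>space lborel. \<not> (x \<notin> {a..b})} = {a..b}" by auto
    ultimately have "emeasure lborel {a..b} = 0" using AE_iff_measurable[OF _ s] by simp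
    then show False using ab by simp
  qed
  with ge show ?thesis by simp
qed

lemma int_pos:
  fixes h :: "real \<Rightarrow> real"
  assumes si: "set_integrable lborel {a..b} h" and ab: "a < b" and pos: "\<forall>x\<in>{a..b}. h x > 0"
  shows "integral {a..b} h > 0"
  using int_pos_L[OF assms] set_borel_integral_eq_integral(2)[OF si] by simp

definition LB :: "(real \<Rightarrow> real) \<Rightarrow> bool" where
  "LB f \<longleftrightarrow> (\<lambda>x. indicator {0..} x * f x) \<in> borel_measurable borel \<and> (\<forall>M. \<exists>B. \<forall>x\<in>{0..M}. \<bar>f x\<bar> \<le> B)"

lemma LB_const: "LB (\<lambda>_. c)"
  unfolding LB_def by auto

lemma LB_id: "LB (\<lambda>x. x)"
  unfolding LB_def
proof
  show "(\<lambda>x::real. indicator {0..} x * x) \<in> borel_measurable borel"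
    by measurable
  show "\<forall>M::real. \<exists>B. \<forall>x\<in>{0..M}. \<bar>x\<bar> \<le> B"
  proof
    fix M :: real show "\<exists>B. \<forall>x\<in>{0..M}. \<bar>x\<bar> \<le> B" by (intro exI[of _ M]) auto
  qed
qed

lemma LB_add:
  assumes "LB f" "LB g" shows "LB (\<lambda>x. f x + g x)"
proof -
  have e: "(\<lambda>x. indicator {0..} x * (f x + g x)) = (\<lambda>x. indicator {0..} x * f x + indicator {0..} x * g x)"
    by (auto simp: algebra_simps)
  have b: "\<exists>B. \<forall>x\<in>{0..M}. \<bar>f x + g x\<bar> \<le> B" for M
  proof -
    obtain B1 where B1: "\<forall>x\<in>{0..M}. \<bar>f x\<bar> \<le> B1" using assms unfolding LB_def by blast
    obtain B2 where B2: "\<forall>x\<in>{0..M}. \<bar>g x\<bar> \<le> B2" using assms unfolding LB_def by blast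
    show ?thesis using B1 B2 by (intro exI[of _ "B1 + B2"]) (auto intro: abs_triangle_ineq[THEN order_trans] add_mono)
  qed
  show ?thesis using assms b unfolding LB_def e by auto
qed

lemma LB_mult:
  assumes "LB f" "LB g" shows "LB (\<lambda>x. f x * g x)"
proof -
  have e: "(\<lambda>x. indicator {0..} x * (f x * g x)) = (\<lambda>x. (indicator {0..} x * f x) * (indicator {0..} x * g x))"
    by (auto simp: algebra_simps split: split_indicator)
  have b: "\<exists>B. \<forall>x\<in>{0..M}. \<bar>f x * g x\<bar> \<le> B" for M
  proof -
    obtain B1 where B1: "\<forall>x\<in>{0..M}. \<bar>f x\<bar> \<le> B1" using assms unfolding LB_def by blast
    obtain B2 where B2: "\<forall>x\<in>{0..M}. \<bar>g x\<bar> \<le> B2" using assms unfolding LB_def by blast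
    have "\<bar>f x * g x\<bar> \<le> B1 * B2" if "x \<in> {0..M}" for x
    proof -
      have 1: "\<bar>f x\<bar> \<le> B1" "\<bar>g x\<bar> \<le> B2" using B1 B2 that by auto
      then have "0 \<le> B1" by linarith
      then show ?thesis using 1 by (simp add: abs_mult mult_mono)
    qed
    then show ?thesis by blast
  qed
  show ?thesis using assms b unfolding LB_def e by auto
qed

lemma LB_uminus: assumes "LB f" shows "LB (\<lambda>x. - f x)"
  using LB_mult[OF LB_const[of "-1"] assms] by simp

lemma LB_diff: assumes "LB f" "LB g" shows "LB (\<lambda>x. f x - g x)"
  using LB_add[OF assms(1) LB_uminus[OF assms(2)]] by simp

lemma LB_si: assumes "LB f" "0 \<le> a" shows "set_integrable lborel {a..b} f"
proof -
  obtain B where "\<forall>x\<in>{0..b}. \<bar>f x\<bar> \<le> B" using assms unfolding LB_def by blast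
  then have "\<forall>x\<in>{a..b}. \<bar>f x\<bar> \<le> B" using assms(2) by auto
  then show ?thesis using si_gen assms unfolding LB_def by blast
qed

lemma LB_int: assumes "LB f" "0 \<le> a"
  shows "f integrable_on {a..b}" "(LINT x:{a..b}|lborel. f x) = integral {a..b} f"
  using set_borel_integral_eq_integral[OF LB_si[OF assms]] by auto

lemma LB_pos: assumes "LB f" "0 \<le> a" "a < b" "\<forall>x\<in>{a..b}. f x > 0"
  shows "integral {a..b} f > 0"
  using int_pos[OF LB_si[OF assms(1,2)] assms(3,4)] .

lemmas LB_intros = LB_const LB_id LB_add LB_mult LB_diff LB_uminus

locale L4 =
  fixes u0 ub \<rho>0 \<rho>b :: "real \<Rightarrow> real" and t :: real
  assumes u0_meas: "set_borel_measurable borel {0..} u0"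
      and ub_meas: "set_borel_measurable borel {0..} ub"
      and r0_meas: "set_borel_measurable borel {0..} \<rho>0"
      and rb_meas: "set_borel_measurable borel {0..} \<rho>b"
      and u0_bdd: "\<exists>B. \<forall>x\<ge>0. \<bar>u0 x\<bar> \<le> B"
      and ub_bdd: "\<exists>B. \<forall>x\<ge>0. \<bar>ub x\<bar> \<le> B"
      and ub_pos: "\<forall>x\<ge>0. ub x > 0"
      and r0_pos: "\<forall>x\<ge>0. \<rho>0 x > 0"
      and rb_pos: "\<forall>x\<ge>0. \<rho>b x > 0"
      and r0_locbdd: "\<forall>M. \<exists>B. \<forall>x\<in>{0..M}. \<rho>0 x \<le> B"
      and rb_locbdd: "\<forall>M. \<exists>B. \<forall>x\<in>{0..M}. \<rho>b x \<le> B"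
      and F_att: "\<forall>x\<ge>0. \<forall>s\<ge>0. \<exists>a b. a \<in> Fargmin u0 \<rho>0 x s \<and> b \<in> Fargmin u0 \<rho>0 x s
                    \<and> Fargmin u0 \<rho>0 x s \<subseteq> {a..b}"
      and G_att: "\<forall>x\<ge>0. \<forall>s\<ge>0. \<exists>a b. a \<in> Gargmin ub \<rho>b x s \<and> b \<in> Gargmin ub \<rho>b x s
                    \<and> Gargmin ub \<rho>b x s \<subseteq> {a..b}"
      and t_pos: "t > 0"
begin

lemma LB_u0: "LB u0"
proof -
  obtain B where B: "\<forall>x\<ge>0. \<bar>u0 x\<bar> \<le> B" using u0_bdd by blast
  then have "\<forall>M. \<exists>B. \<forall>x\<in>{0..M}. \<bar>u0 x\<bar> \<le> B" by (intro allI exI[of _ B]) auto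
  with u0_meas show ?thesis unfolding LB_def set_borel_measurable_def by simp
qed
lemma LB_ub: "LB ub"
proof -
  obtain B where B: "\<forall>x\<ge>0. \<bar>ub x\<bar> \<le> B" using ub_bdd by blast
  then have "\<forall>M. \<exists>B. \<forall>x\<in>{0..M}. \<bar>ub x\<bar> \<le> B" by (intro allI exI[of _ B]) auto
  with ub_meas show ?thesis unfolding LB_def set_borel_measurable_def by simp
qed
lemma LB_r0: "LB \<rho>0"
proof -
  have "\<exists>B. \<forall>x\<in>{0..M}. \<bar>\<rho>0 x\<bar> \<le> B" for M
  proof -
    obtain B where B: "\<forall>x\<in>{0..M}. \<rho>0 x \<le> B" using r0_locbdd by blast
    then have "\<forall>x\<in>{0..M}. \<bar>\<rho>0 x\<bar> \<le> B" using r0_pos by auto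
    then show ?thesis by blast
  qed
  then show ?thesis using r0_meas unfolding LB_def set_borel_measurable_def by auto
qed
lemma LB_rb: "LB \<rho>b"
proof -
  have "\<exists>B. \<forall>x\<in>{0..M}. \<bar>\<rho>b x\<bar> \<le> B" for M
  proof -
    obtain B where B: "\<forall>x\<in>{0..M}. \<rho>b x \<le> B" using rb_locbdd by blast
    then have "\<forall>x\<in>{0..M}. \<bar>\<rho>b x\<bar> \<le> B" using rb_pos by auto
    then show ?thesis by blast
  qed
  then show ?thesis using rb_meas unfolding LB_def set_borel_measurable_def by auto
qed

lemmas LBs = LB_u0 LB_ub LB_r0 LB_rb

abbreviation "hF x \<equiv> (\<lambda>\<eta>. (t * u0 \<eta> + \<eta> - x) * \<rho>0 \<eta>)"
abbreviation "hG x \<equiv> (\<lambda>\<eta>. (x - ub \<eta> * (t - \<eta>)) * \<rho>b \<eta> * ub \<eta>)"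
abbreviation mF :: "real \<Rightarrow> real" where "mF y \<equiv> integral {0..y} \<rho>0"
abbreviation nG :: "real \<Rightarrow> real" where "nG y \<equiv> integral {0..y} (\<lambda>\<eta>. \<rho>b \<eta> * ub \<eta>)"
abbreviation "FA x \<equiv> Fargmin u0 \<rho>0 x t"
abbreviation "GA x \<equiv> Gargmin ub \<rho>b x t"
abbreviation "Fv y x \<equiv> Fy u0 \<rho>0 y x t"
abbreviation "Gv y x \<equiv> G\<tau> ub \<rho>b y x t"

lemma LB_hF: "LB (hF x)" by (intro LB_intros LBs)
lemma LB_hG: "LB (hG x)" by (intro LB_intros LBs)

lemma Fy_int: "Fv y x = integral {0..y} (hF x)"
  unfolding Fy_def by (rule LB_int(2)[OF LB_hF]) simp
lemma Gt_int: "Gv y x = integral {0..y} (hG x)"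
  unfolding G\<tau>_def by (rule LB_int(2)[OF LB_hG]) simp

lemma Fy_lin: "Fv y x = Fv y 0 - x * mF y"
proof -
  have e: "hF x = (\<lambda>\<eta>. hF 0 \<eta> - x * \<rho>0 \<eta>)" by (auto simp: algebra_simps)
  have "integral {0..y} (hF x) = integral {0..y} (hF 0) - integral {0..y} (\<lambda>\<eta>. x * \<rho>0 \<eta>)"
    unfolding e by (rule integral_diff) (intro LB_int(1) LB_intros LBs; simp)+
  then show ?thesis unfolding Fy_int by simp
qed

lemma Gt_lin: "Gv y x = Gv y 0 + x * nG y"
proof -
  have e: "hG x = (\<lambda>\<eta>. hG 0 \<eta> + x * (\<rho>b \<eta> * ub \<eta>))" by (auto simp: algebra_simps fun_eq_iff)
  have "integral {0..y} (hG x) = integral {0..y} (hG 0) + integral {0..y} (\<lambda>\<eta>. x * (\<rho>b \<eta> * ub \<eta>))"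
    unfolding e by (rule integral_add) (intro LB_int(1) LB_intros LBs; simp)+
  then show ?thesis unfolding Gt_int by simp
qed

lemma m_split: "0 \<le> a \<Longrightarrow> a \<le> b \<Longrightarrow> mF b = mF a + integral {a..b} \<rho>0"
  using Henstock_Kurzweil_Integration.integral_combine[where a=0 and c=a and b=b and f=\<rho>0] LB_int(1)[OF LB_r0, where a=0 and b=b] by simp

lemma m_strict: "0 \<le> a \<Longrightarrow> a < b \<Longrightarrow> mF a < mF b"
  using m_split[of a b] LB_pos[OF LB_r0, of a b] r0_pos by auto

lemma m_nonneg: "mF y \<ge> 0"
  using LB_int(1)[OF LB_r0, of 0 y] r0_pos by (intro integral_nonneg) (auto intro: less_imp_le)

lemma m_mono: "0 \<le> a \<Longrightarrow> a \<le> b \<Longrightarrow> mF a \<le> mF b"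
  using m_strict[of a b] by (cases "a = b") auto

lemma n_nonneg: "nG y \<ge> 0"
proof (rule integral_nonneg)
  show "(\<lambda>\<eta>. \<rho>b \<eta> * ub \<eta>) integrable_on {0..y}" using LB_int(1)[OF LB_mult[OF LB_rb LB_ub], of 0 y] by simp
  fix \<eta> assume "\<eta> \<in> {0..y}"
  then have "\<rho>b \<eta> > 0" "ub \<eta> > 0" using rb_pos ub_pos by auto
  then show "0 \<le> \<rho>b \<eta> * ub \<eta>" by simp
qed

lemma FA_iff: "y \<in> FA x \<longleftrightarrow> 0 \<le> y \<and> (\<forall>y'\<ge>0. Fv y x \<le> Fv y' x)"
  unfolding Fargmin_def by simp
lemma GA_iff: "y \<in> GA x \<longleftrightarrow> 0 \<le> y \<and> (\<forall>y'\<ge>0. Gv y x \<le> Gv y' x)"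
  unfolding Gargmin_def by simp

lemma Fatt: assumes "0 \<le> x"
  shows "ylo u0 \<rho>0 x t \<in> FA x" "yup u0 \<rho>0 x t \<in> FA x" "FA x \<subseteq> {ylo u0 \<rho>0 x t..yup u0 \<rho>0 x t}"
proof -
  obtain a b where ab: "a \<in> FA x" "b \<in> FA x" "FA x \<subseteq> {a..b}"
    using F_att[rule_format, OF assms less_imp_le[OF t_pos]] by blast
  have "ylo u0 \<rho>0 x t = a" unfolding ylo_def using ab by (intro cInf_eq_minimum) auto
  moreover have "yup u0 \<rho>0 x t = b" unfolding yup_def using ab by (intro cSup_eq_maximum) auto
  ultimately show "ylo u0 \<rho>0 x t \<in> FA x" "yup u0 \<rho>0 x t \<in> FA x" "FA x \<subseteq> {ylo u0 \<rho>0 x t..yup u0 \<rho>0 x t}"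
    using ab by auto
qed

lemma Gatt: assumes "0 \<le> x"
  shows "tlo ub \<rho>b x t \<in> GA x" "tup ub \<rho>b x t \<in> GA x" "GA x \<subseteq> {tlo ub \<rho>b x t..tup ub \<rho>b x t}"
proof -
  obtain a b where ab: "a \<in> GA x" "b \<in> GA x" "GA x \<subseteq> {a..b}"
    using G_att[rule_format, OF assms less_imp_le[OF t_pos]] by blast
  have "tlo ub \<rho>b x t = a" unfolding tlo_def using ab by (intro cInf_eq_minimum) auto
  moreover have "tup ub \<rho>b x t = b" unfolding tup_def using ab by (intro cSup_eq_maximum) auto
  ultimately show "tlo ub \<rho>b x t \<in> GA x" "tup ub \<rho>b x t \<in> GA x" "GA x \<subseteq> {tlo ub \<rho>b x t..tup ub \<rho>b x t}"
    using ab by auto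
qed

lemma Fmin_eq: "y \<in> FA x \<Longrightarrow> Fmin u0 \<rho>0 x t = Fv y x"
  unfolding Fmin_def by (rule cInf_eq_minimum) (auto simp: FA_iff)
lemma Gmin_eq: "y \<in> GA x \<Longrightarrow> Gmin ub \<rho>b x t = Gv y x"
  unfolding Gmin_def by (rule cInf_eq_minimum) (auto simp: GA_iff)

lemma FA_mono:
  assumes "0 \<le> x" "x < x'" "y \<in> FA x" "y' \<in> FA x'"
  shows "y \<le> y'"
proof (rule ccontr)
  assume "\<not> y \<le> y'"
  then have yy: "y' < y" by simp
  have 0: "0 \<le> y'" using assms(4) FA_iff by auto
  have 1: "Fv y x \<le> Fv y' x" using assms(3) 0 FA_iff by auto
  have 2: "Fv y' x' \<le> Fv y x'" using assms(4,3) FA_iff by auto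
  have "mF y' < mF y" using m_strict[OF 0 yy] .
  then have "0 < (x' - x) * (mF y - mF y')" using assms(2) by simp
  moreover have "(x' - x) * (mF y - mF y') = x' * mF y - x' * mF y' - x * mF y + x * mF y'"
    by (simp add: algebra_simps)
  ultimately show False using 1 2 Fy_lin[of y x] Fy_lin[of y' x] Fy_lin[of y x'] Fy_lin[of y' x']
    by linarith
qed


abbreviation "ya x \<equiv> ylo u0 \<rho>0 x t"
abbreviation "yb x \<equiv> yup u0 \<rho>0 x t"
abbreviation "ta x \<equiv> tlo ub \<rho>b x t"
abbreviation "tb x \<equiv> tup ub \<rho>b x t"
abbreviation "U x \<equiv> usol u0 \<rho>0 ub \<rho>b x t"
abbreviation "FM x \<equiv> Fmin u0 \<rho>0 x t"
abbreviation "GM x \<equiv> Gmin ub \<rho>b x t"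

lemma Fv0: "Fv 0 x = 0" by (simp add: Fy_int)
lemma Gv0: "Gv 0 x = 0" by (simp add: Gt_int)

lemma Ubd_F:
  assumes x: "0 < x" and FG: "FM x < GM x"
  shows "(x - yb x) / t \<le> U x \<and> U x \<le> (x - ya x) / t"
proof -
  define a where "a = ya x"
  define b where "b = yb x"
  have aA: "a \<in> FA x" and bA: "b \<in> FA x" and ab: "a \<le> b" using Fatt[of x] x unfolding a_def b_def by auto
  have a0: "0 \<le> a" using aA FA_iff by auto
  have Ueq: "U x = (if a = b then (x - a) / t
        else (LINT \<eta>:{a..b}|lborel. \<rho>0 \<eta> * u0 \<eta>) / (LINT \<eta>:{a..b}|lborel. \<rho>0 \<eta>))"
    using x FG unfolding a_def b_def by (simp add: usol_def Let_def)
  show ?thesis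
  proof (cases "a = b")
    case True
    then show ?thesis using Ueq unfolding a_def b_def by simp
  next
    case False
    then have ab': "a < b" using ab by simp
    define P where "P = integral {a..b} \<rho>0"
    define Ru where "Ru = integral {a..b} (\<lambda>\<eta>. \<rho>0 \<eta> * u0 \<eta>)"
    have Ppos: "P > 0" unfolding P_def using LB_pos[OF LB_r0 a0 ab'] r0_pos a0 by auto
    have U2: "U x = Ru / P" using Ueq False
      unfolding P_def Ru_def LB_int(2)[OF LB_r0 a0] LB_int(2)[OF LB_mult[OF LB_r0 LB_u0] a0] by simp
    have eqF: "Fv b x = Fv a x" using aA bA FA_iff by (meson order_antisym)
    have comb: "Fv b x = Fv a x + integral {a..b} (hF x)"
      unfolding Fy_int using Henstock_Kurzweil_Integration.integral_combine[where a=0 and c=a and b=b and f="hF x"] LB_int(1)[OF LB_hF, where a=0 and b=b] a0 ab by simp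
    have I0: "integral {a..b} (hF x) = 0" using eqF comb by simp
    have e: "hF x = (\<lambda>\<eta>. t * (\<rho>0 \<eta> * u0 \<eta>) + (\<eta> - x) * \<rho>0 \<eta>)"
      by (rule ext) (simp add: algebra_simps)
    have int1: "(\<lambda>\<eta>. t * (\<rho>0 \<eta> * u0 \<eta>)) integrable_on {a..b}"
      by (intro LB_int(1)[OF _ a0] LB_intros LBs)
    have int2: "(\<lambda>\<eta>. (\<eta> - x) * \<rho>0 \<eta>) integrable_on {a..b}"
      by (intro LB_int(1)[OF _ a0] LB_intros LBs)
    have spl: "integral {a..b} (hF x) = t * Ru + integral {a..b} (\<lambda>\<eta>. (\<eta> - x) * \<rho>0 \<eta>)"
      unfolding e integral_add[OF int1 int2] Ru_def by simp
    have lo: "(a - x) * P \<le> integral {a..b} (\<lambda>\<eta>. (\<eta> - x) * \<rho>0 \<eta>)"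
    proof -
      have "integral {a..b} (\<lambda>\<eta>. (a - x) * \<rho>0 \<eta>) \<le> integral {a..b} (\<lambda>\<eta>. (\<eta> - x) * \<rho>0 \<eta>)"
      proof (rule integral_le)
        show "(\<lambda>\<eta>. (a - x) * \<rho>0 \<eta>) integrable_on {a..b}" by (intro LB_int(1)[OF _ a0] LB_intros LBs)
        show "(a - x) * \<rho>0 \<eta> \<le> (\<eta> - x) * \<rho>0 \<eta>" if "\<eta> \<in> {a..b}" for \<eta>
          using that a0 r0_pos by (intro mult_right_mono) (auto intro: less_imp_le)
      qed (rule int2)
      then show ?thesis unfolding P_def by simp
    qed
    have hi: "integral {a..b} (\<lambda>\<eta>. (\<eta> - x) * \<rho>0 \<eta>) \<le> (b - x) * P"
    proof -
      have "integral {a..b} (\<lambda>\<eta>. (\<eta> - x) * \<rho>0 \<eta>) \<le> integral {a..b} (\<lambda>\<eta>. (b - x) * \<rho>0 \<eta>)"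
      proof (rule integral_le)
        show "(\<lambda>\<eta>. (b - x) * \<rho>0 \<eta>) integrable_on {a..b}" by (intro LB_int(1)[OF _ a0] LB_intros LBs)
        show "(\<eta> - x) * \<rho>0 \<eta> \<le> (b - x) * \<rho>0 \<eta>" if "\<eta> \<in> {a..b}" for \<eta>
          using that a0 r0_pos by (intro mult_right_mono) (auto intro: less_imp_le)
      qed (rule int2)
      then show ?thesis unfolding P_def by simp
    qed
    have A1: "(x - b) * P \<le> t * Ru" using I0 spl hi by (simp add: algebra_simps)
    have A2: "t * Ru \<le> (x - a) * P" using I0 spl lo by (simp add: algebra_simps)
    have "(x - b) / t \<le> Ru / P" using A1 Ppos t_pos by (simp add: field_simps)
    moreover have "Ru / P \<le> (x - a) / t" using A2 Ppos t_pos by (simp add: field_simps)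
    ultimately show ?thesis using U2 unfolding a_def b_def by simp
  qed
qed


lemma part1:
  assumes FG0: "FM 0 < GM 0"
  shows "\<exists>L. (U \<longlongrightarrow> L) (at_right 0) \<and> L < 0"
proof -
  define y0 where "y0 = yb 0"
  define Y where "Y = ya 1"
  have y0A: "y0 \<in> FA 0" using Fatt(2)[of 0] y0_def by simp
  have y0nn: "0 \<le> y0" using y0A FA_iff by auto
  have FM0: "FM 0 = Fv y0 0" using Fmin_eq[OF y0A] .
  have GM0le: "GM 0 \<le> 0"
  proof -
    have "ta 0 \<in> GA 0" using Gatt(1)[of 0] by simp
    then show ?thesis using Gmin_eq[of "ta 0" 0] GA_iff Gv0[of 0] by fastforce
  qed
  have y0pos: "0 < y0"
  proof (rule ccontr)
    assume "\<not> 0 < y0"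
    then have "y0 = 0" using y0nn by simp
    then show False using FM0 Fv0[of 0] FG0 GM0le by simp
  qed
  have lowA: "y0 \<le> ya x" if "0 < x" for x
    using FA_mono[of 0 x y0 "ya x"] Fatt(1)[of x] y0A that by simp
  have ab: "ya x \<le> yb x" if "0 \<le> x" for x
    using Fatt[of x] that by auto
  have upY: "yb x \<le> Y" if "0 \<le> x" "x < 1" for x
    using FA_mono[of x 1 "yb x" "ya 1"] Fatt(2)[of x] Fatt(1)[of 1] that unfolding Y_def by simp
  have FGx: "FM x < GM x" if x: "0 < x" for x
  proof -
    have "FM x = Fv (ya x) x" using Fmin_eq Fatt(1)[of x] x by simp
    also have "\<dots> \<le> Fv y0 x" using Fatt(1)[of x] x FA_iff y0nn by auto
    also have "\<dots> \<le> FM 0" using Fy_lin[of y0 x] FM0 m_nonneg[of y0] x by simp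
    finally have 1: "FM x \<le> FM 0" .
    have tA: "ta x \<in> GA x" using Gatt(1)[of x] x by simp
    have t0A: "ta 0 \<in> GA 0" using Gatt(1)[of 0] by simp
    have "GM 0 = Gv (ta 0) 0" using Gmin_eq[OF t0A] .
    also have "\<dots> \<le> Gv (ta x) 0" using t0A tA GA_iff by auto
    also have "\<dots> \<le> Gv (ta x) x" using Gt_lin[of "ta x" x] n_nonneg[of "ta x"] x by simp
    also have "\<dots> = GM x" using Gmin_eq[OF tA] by simp
    finally show ?thesis using 1 FG0 by simp
  qed
  have tb: "(yb \<longlongrightarrow> y0) (at_right 0)"
  proof (rule order_tendstoI)
    fix c assume cy0: "c < y0"
    show "eventually (\<lambda>x. c < yb x) (at_right 0)"
      unfolding eventually_at_right_field
    proof (intro exI[of _ 1] conjI allI impI)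
      fix x :: real assume "0 < x" "x < 1"
      then show "c < yb x" using lowA[of x] ab[of x] cy0 by simp
    qed simp
  next
    fix c assume cy: "y0 < c"
    show "eventually (\<lambda>x. yb x < c) (at_right 0)"
    proof (cases "Y < c")
      case True
      show ?thesis unfolding eventually_at_right_field
      proof (intro exI[of _ 1] conjI allI impI)
        fix x :: real assume "0 < x" "x < 1"
        then show "yb x < c" using upY[of x] True by simp
      qed simp
    next
      case False
      then have cY: "c \<le> Y" by simp
      have cont0: "continuous_on {0..Y} (\<lambda>y. integral {0..y} (hF 0))"
        by (rule indefinite_integral_continuous_1) (rule LB_int(1)[OF LB_hF]; simp)
      have "continuous_on {c..Y} (\<lambda>y. integral {0..y} (hF 0))"
        using continuous_on_subset[OF cont0] cy y0nn by auto
      then obtain z where z: "z \<in> {c..Y}" "\<forall>y\<in>{c..Y}. integral {0..z} (hF 0) \<le> integral {0..y} (hF 0)"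
        using continuous_attains_inf[of "{c..Y}"] cY by fastforce
      then have zmin: "\<forall>y\<in>{c..Y}. Fv z 0 \<le> Fv y 0" unfolding Fy_int by simp
      have z0: "0 \<le> z" using z cy y0nn by auto
      have ge: "Fv y0 0 \<le> Fv z 0" using y0A FA_iff z0 by auto
      have gap: "Fv y0 0 < Fv z 0"
      proof (rule ccontr)
        assume "\<not> Fv y0 0 < Fv z 0"
        then have "Fv z 0 = Fv y0 0" using ge by simp
        then have "z \<in> FA 0" using y0A FA_iff z0 by auto
        then have "z \<le> y0" using Fatt(3)[of 0] y0_def by auto
        then show False using z cy by simp
      qed
      define g where "g = Fv z 0 - Fv y0 0"
      have gpos: "g > 0" using gap g_def by simp
      have d1: "mF Y + 1 > 0" using m_nonneg[of Y] by simp
      define \<delta> where "\<delta> = min 1 (g / (mF Y + 1))"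
      have dpos: "\<delta> > 0" unfolding \<delta>_def using gpos d1 by simp
      show ?thesis unfolding eventually_at_right_field
      proof (intro exI[of _ \<delta>] conjI allI impI)
        show "0 < \<delta>" by (rule dpos)
        fix x assume x: "0 < x" "x < \<delta>"
        show "yb x < c"
        proof (rule ccontr)
          assume "\<not> yb x < c"
          then have cb: "c \<le> yb x" by simp
          have x1: "x < 1" using x \<delta>_def by simp
          have bY: "yb x \<le> Y" using upY[of x] x x1 by simp
          have b0: "0 \<le> yb x" using cb cy y0nn by simp
          have 1: "Fv z 0 \<le> Fv (yb x) 0" using zmin cb bY by simp
          have 2: "Fv (yb x) x \<le> Fv y0 x" using Fatt(2)[of x] x FA_iff y0nn by auto
          have 3: "x * mF (yb x) \<le> x * mF Y" using m_mono[OF b0 bY] x by (simp add: mult_left_mono)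
          have 4: "x * mF y0 \<ge> 0" using m_nonneg[of y0] x by simp
          have "x < g / (mF Y + 1)" using x \<delta>_def by simp
          then have 5: "x * (mF Y + 1) < g" using d1 by (simp add: less_divide_eq)
          have 6: "x * (mF Y + 1) = x * mF Y + x" by (simp add: algebra_simps)
          show False using 1 2 3 4 5 6 Fy_lin[of "yb x" x] Fy_lin[of y0 x] g_def x
            by linarith
        qed
      qed
    qed
  qed
  have ta': "(ya \<longlongrightarrow> y0) (at_right 0)"
  proof (rule tendsto_sandwich[OF _ _ tendsto_const tb])
    show "eventually (\<lambda>x. y0 \<le> ya x) (at_right 0)"
      unfolding eventually_at_right_field using lowA by (intro exI[of _ 1]) auto
    show "eventually (\<lambda>x. ya x \<le> yb x) (at_right 0)"
      unfolding eventually_at_right_field using ab by (intro exI[of _ 1]) auto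
  qed
  have lo: "((\<lambda>x. (x - yb x) / t) \<longlongrightarrow> (0 - y0) / t) (at_right 0)"
    by (intro tendsto_intros tb) (use t_pos in simp)
  have hi: "((\<lambda>x. (x - ya x) / t) \<longlongrightarrow> (0 - y0) / t) (at_right 0)"
    by (intro tendsto_intros ta') (use t_pos in simp)
  have "(U \<longlongrightarrow> (0 - y0) / t) (at_right 0)"
  proof (rule tendsto_sandwich[OF _ _ lo hi])
    show "eventually (\<lambda>x. (x - yb x) / t \<le> U x) (at_right 0)"
      unfolding eventually_at_right_field using Ubd_F FGx by (intro exI[of _ 1]) auto
    show "eventually (\<lambda>x. U x \<le> (x - ya x) / t) (at_right 0)"
      unfolding eventually_at_right_field using Ubd_F FGx by (intro exI[of _ 1]) auto
  qed
  moreover have "(0 - y0) / t < 0" using y0pos t_pos by (simp add: divide_neg_pos)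
  ultimately show ?thesis by blast
qed


lemma tau_lt:
  assumes x: "0 < x" and tA: "\<tau> \<in> GA x"
  shows "\<tau> < t"
proof (rule ccontr)
  assume "\<not> \<tau> < t"
  then have tt: "t \<le> \<tau>" by simp
  obtain B where B: "\<forall>x\<ge>0. \<bar>ub x\<bar> \<le> B" using ub_bdd by blast
  have Bpos: "B > 0" using B[rule_format, of 0] ub_pos by force
  define \<tau>' where "\<tau>' = max 0 (t - x / (2 * B))"
  have t'0: "0 \<le> \<tau>'" unfolding \<tau>'_def by simp
  have t't: "\<tau>' < t" unfolding \<tau>'_def using t_pos x Bpos by simp
  have pos: "\<forall>\<eta>\<in>{\<tau>'..\<tau>}. hG x \<eta> > 0"
  proof
    fix \<eta> assume e: "\<eta> \<in> {\<tau>'..\<tau>}"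
    then have e0: "0 \<le> \<eta>" using t'0 by simp
    have ubp: "ub \<eta> > 0" "\<rho>b \<eta> > 0" using ub_pos rb_pos e0 by auto
    have "ub \<eta> * (t - \<eta>) < x"
    proof (cases "t - \<eta> \<le> 0")
      case True
      then show ?thesis using ubp x mult_nonneg_nonpos[of "ub \<eta>" "t - \<eta>"] by linarith
    next
      case False
      have "t - \<eta> \<le> x / (2 * B)" using e unfolding \<tau>'_def by simp
      moreover have "ub \<eta> \<le> B" using B e0 by fastforce
      ultimately have "ub \<eta> * (t - \<eta>) \<le> B * (x / (2 * B))"
        using False ubp by (intro mult_mono) auto
      also have "\<dots> = x / 2" using Bpos by simp
      finally show ?thesis using x by simp
    qed
    then show "hG x \<eta> > 0" using ubp by simp
  qed
  have ipos: "integral {\<tau>'..\<tau>} (hG x) > 0"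
    using LB_pos[OF LB_hG t'0 _ pos] t't tt by simp
  have comb: "Gv \<tau> x = Gv \<tau>' x + integral {\<tau>'..\<tau>} (hG x)"
    unfolding Gt_int using Henstock_Kurzweil_Integration.integral_combine[where a=0 and c=\<tau>' and b=\<tau> and f="hG x"] LB_int(1)[OF LB_hG, where a=0 and b=\<tau>] t'0 t't tt by simp
  have "Gv \<tau> x \<le> Gv \<tau>' x" using tA GA_iff t'0 by auto
  then show False using comb ipos by simp
qed

lemma part2:
  assumes lim: "(U \<longlongrightarrow> L) (at_right 0)" and L: "L < 0"
  shows "FM 0 \<le> GM 0"
proof (rule ccontr)
  assume "\<not> FM 0 \<le> GM 0"
  then have FG0: "GM 0 < FM 0" by simp
  define y0 where "y0 = yb 0"
  define Y where "Y = ya 1"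
  define \<tau>0 where "\<tau>0 = ta 0"
  have y0A: "y0 \<in> FA 0" using Fatt(2)[of 0] y0_def by simp
  have t0A: "\<tau>0 \<in> GA 0" using Gatt(1)[of 0] \<tau>0_def by simp
  have t0nn: "0 \<le> \<tau>0" using t0A GA_iff by auto
  have ab: "ya x \<le> yb x" if "0 \<le> x" for x
    using Fatt[of x] that by auto
  have upY: "yb x \<le> Y" if "0 \<le> x" "x < 1" for x
    using FA_mono[of x 1 "yb x" "ya 1"] Fatt(2)[of x] Fatt(1)[of 1] that unfolding Y_def by simp
  define d where "d = FM 0 - GM 0"
  have dpos: "d > 0" using FG0 d_def by simp
  have D: "mF Y + nG \<tau>0 + 1 > 0" using m_nonneg[of Y] n_nonneg[of \<tau>0] by simp
  define \<delta> where "\<delta> = min 1 (d / (mF Y + nG \<tau>0 + 1))"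
  have deltapos: "\<delta> > 0" unfolding \<delta>_def using dpos D by simp
  have Upos: "U x > 0" if x: "0 < x" "x < \<delta>" for x
  proof -
    have x1: "x < 1" using x \<delta>_def by simp
    have aA: "ya x \<in> FA x" using Fatt(1)[of x] x by simp
    have a0: "0 \<le> ya x" using aA FA_iff by auto
    have aY: "ya x \<le> Y" using ab[of x] upY[of x] x x1 by simp
    have "FM x = Fv (ya x) x" using Fmin_eq[OF aA] .
    also have "\<dots> = Fv (ya x) 0 - x * mF (ya x)" by (rule Fy_lin)
    finally have F1: "FM x = Fv (ya x) 0 - x * mF (ya x)" .
    have F2: "FM 0 \<le> Fv (ya x) 0" using Fmin_eq[OF y0A] y0A FA_iff a0 by auto
    have F3: "x * mF (ya x) \<le> x * mF Y" using m_mono[OF a0 aY] x by (simp add: mult_left_mono)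
    have tA: "ta x \<in> GA x" using Gatt(1)[of x] x by simp
    have "GM x = Gv (ta x) x" using Gmin_eq[OF tA] .
    also have "\<dots> \<le> Gv \<tau>0 x" using tA GA_iff t0nn by auto
    also have "\<dots> = GM 0 + x * nG \<tau>0" using Gt_lin[of \<tau>0 x] Gmin_eq[OF t0A] by simp
    finally have G1: "GM x \<le> GM 0 + x * nG \<tau>0" .
    have "x < d / (mF Y + nG \<tau>0 + 1)" using x \<delta>_def by simp
    then have 5: "x * (mF Y + nG \<tau>0 + 1) < d" using D by (simp add: less_divide_eq)
    have 6: "x * (mF Y + nG \<tau>0 + 1) = x * mF Y + x * nG \<tau>0 + x" by (simp add: algebra_simps)
    have FGx: "GM x < FM x" using F1 F2 F3 G1 5 6 d_def x by linarith
    have Ueq: "U x = (if ta x = tb x then x / (t - ta x)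
        else (LINT \<eta>:{ta x..tb x}|lborel. \<rho>b \<eta> * (ub \<eta>)\<^sup>2) / (LINT \<eta>:{ta x..tb x}|lborel. \<rho>b \<eta> * ub \<eta>))"
      using x FGx by (simp add: usol_def Let_def)
    show ?thesis
    proof (cases "ta x = tb x")
      case True
      have "ta x < t" using tau_lt[OF x(1) tA] .
      then show ?thesis using Ueq True x by simp
    next
      case False
      have ta0: "0 \<le> ta x" using tA GA_iff by auto
      have "ta x \<le> tb x" using Gatt[of x] x by auto
      then have lt: "ta x < tb x" using False by simp
      have p1: "integral {ta x..tb x} (\<lambda>\<eta>. \<rho>b \<eta> * (ub \<eta>)\<^sup>2) > 0"
        using ta0 rb_pos ub_pos by (intro LB_pos[OF _ ta0 lt]) (auto simp: power2_eq_square intro!: LB_intros LBs)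
      have p2: "integral {ta x..tb x} (\<lambda>\<eta>. \<rho>b \<eta> * ub \<eta>) > 0"
        using ta0 rb_pos ub_pos by (intro LB_pos[OF _ ta0 lt]) (auto intro!: LB_intros LBs)
      have LBsq: "LB (\<lambda>\<eta>. \<rho>b \<eta> * (ub \<eta>)\<^sup>2)" unfolding power2_eq_square by (intro LB_intros LBs)
      show ?thesis using Ueq False p1 p2
        unfolding LB_int(2)[OF LBsq ta0] LB_int(2)[OF LB_mult[OF LB_rb LB_ub] ta0] by simp
    qed
  qed
  have "eventually (\<lambda>x. 0 \<le> U x) (at_right 0)"
    unfolding eventually_at_right_field using Upos deltapos
    by (intro exI[of _ \<delta>]) (auto intro: less_imp_le)
  then have "0 \<le> L" using tendsto_lowerbound[OF lim] by simp
  then show False using L by simp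
qed

end

theorem lemma4p2:
  fixes u0 ub \<rho>0 \<rho>b :: "real \<Rightarrow> real" and t :: real
  assumes u0_meas: "set_borel_measurable borel {0..} u0"
      and ub_meas: "set_borel_measurable borel {0..} ub"
      and r0_meas: "set_borel_measurable borel {0..} \<rho>0"
      and rb_meas: "set_borel_measurable borel {0..} \<rho>b"
      and u0_bdd: "\<exists>B. \<forall>x\<ge>0. \<bar>u0 x\<bar> \<le> B"
      and ub_bdd: "\<exists>B. \<forall>x\<ge>0. \<bar>ub x\<bar> \<le> B"
      and ub_pos: "\<forall>x\<ge>0. ub x > 0"
      and r0_pos: "\<forall>x\<ge>0. \<rho>0 x > 0"
      and rb_pos: "\<forall>x\<ge>0. \<rho>b x > 0"
      and r0_locbdd: "\<forall>M. \<exists>B. \<forall>x\<in>{0..M}. \<rho>0 x \<le> B"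
      and rb_locbdd: "\<forall>M. \<exists>B. \<forall>x\<in>{0..M}. \<rho>b x \<le> B"
      and F_att: "\<forall>x\<ge>0. \<forall>s\<ge>0. \<exists>a b. a \<in> Fargmin u0 \<rho>0 x s \<and> b \<in> Fargmin u0 \<rho>0 x s
                    \<and> Fargmin u0 \<rho>0 x s \<subseteq> {a..b}"
      and G_att: "\<forall>x\<ge>0. \<forall>s\<ge>0. \<exists>a b. a \<in> Gargmin ub \<rho>b x s \<and> b \<in> Gargmin ub \<rho>b x s
                    \<and> Gargmin ub \<rho>b x s \<subseteq> {a..b}"
      and t_pos: "t > 0"
  shows "(Fmin u0 \<rho>0 0 t < Gmin ub \<rho>b 0 t \<longrightarrow>
            (\<exists>L. ((\<lambda>x. usol u0 \<rho>0 ub \<rho>b x t) \<longlongrightarrow> L) (at_right 0) \<and> L < 0))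
       \<and> (\<forall>L. ((\<lambda>x. usol u0 \<rho>0 ub \<rho>b x t) \<longlongrightarrow> L) (at_right 0) \<and> L < 0 \<longrightarrow>
            Fmin u0 \<rho>0 0 t \<le> Gmin ub \<rho>b 0 t)"
proof -
  interpret L4 u0 ub \<rho>0 \<rho>b t
    using assms by unfold_locales
  show ?thesis using part1 part2 by blast
qed

end
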